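(* Let $\boldsymbol{X}$ be a covariate vector, let $Z$ be an instrument taking values in $\{0_a,1_a,0_b,1_b\}$, let $D(Z=z)\in\{0,1\}$ denote the potential treatment under $Z=z$, and let $Y(D=d)$, $d\in\{0,1\}$, denote the potential outcomes, all defined on a common probability space with distribution $P_0$. Assume the standing nested-monotonicity structure: $D(Z=1_a)-D(Z=0_a)\in\{0,1\}$ and $D(Z=1_b)-D(Z=0_b)\in\{0,1\}$ almost surely, and $D(Z=1_a)-D(Z=0_a)=1$ implies $D(Z=1_b)-D(Z=0_b)=1$. Let $S$ denote the principal stratum, where $\{S=\text{ACO}\}=\{D(Z=1_a)-D(Z=0_a)=1\}$ (always-compliers) and $\{S=\text{SW}\}=\{D(Z=1_b)-D(Z=0_b)=1,\ D(Z=1_a)-D(Z=0_a)=0\}$ (switchers), and assume $P_0(S=\text{ACO}\mid \boldsymbol{X})>0$ and $P_0(S=\text{SW}\mid\boldsymbol{X})>0$ almost surely. Define $\text{ATE}_{P_0}(\boldsymbol{x})=\mathbb{E}_{P_0}[Y(D=1)-Y(D=0)\mid \boldsymbol{X}=\boldsymbol{x}]$, $\text{ACOATE}_{P_0}(\boldsymbol{x})=\mathbb{E}_{P_0}[Y(D=1)-Y(D=0)\mid S=\text{ACO},\boldsymbol{X}=\boldsymbol{x}]$, $\text{SWATE}_{P_0}(\boldsymbol{x})=\mathbb{E}_{P_0}[Y(D=1)-Y(D=0)\mid S=\text{SW},\boldsymbol{X}=\boldsymbol{x}]$. Suppose one of the following holds: (i) (Principal ignorability) $\mathbb{E}_{P_0}[Y(D=d)\mid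 S=s,\boldsymbol{X}]=\mathbb{E}_{P_0}[Y(D=d)\mid \boldsymbol{X}]$ for $d\in\{0,1\}$ and every stratum value $s$; (ii) (No unmeasured common effect modifier) $\text{Cov}_{P_0}\big[(D(Z=1_a)-D(Z=0_a))(Y(D=1)-Y(D=0))\mid \boldsymbol{X}\big]=0$ and $\text{Cov}_{P_0}\big[(D(Z=1_b)-D(Z=0_b))(Y(D=1)-Y(D=0))\mid \boldsymbol{X}\big]=0$, where the covariance is understood as that between $D(Z=1_\cdot)-D(Z=0_\cdot)$ and $Y(D=1)-Y(D=0)$ conditional on $\boldsymbol{X}$. Then $\text{ATE}_{P_0}(\boldsymbol{x})=\text{ACOATE}_{P_0}(\boldsymbol{x})=\text{SWATE}_{P_0}(\boldsymbol{x})$.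
   Context: Nested instrumental variable design: two IV pairs $\{0_a,1_a\}$ and $\{0_b,1_b\}$, with compliers under pair $a$ (always-compliers, ACO) also being compliers under pair $b$; switchers (SW) comply under pair $b$ but not under pair $a$. *)

theory Defs
  imports "HOL-Probability.Probability"
begin

datatype iv = Z0a | Z1a | Z0b | Z1b

definition sigmaX :: "'a measure \<Rightarrow> 'b measure \<Rightarrow> ('a \<Rightarrow> 'b) \<Rightarrow> 'a measure" where
  "sigmaX M N X = vimage_algebra (space M) X N"

definition cond_exp_event :: "'a measure \<Rightarrow> 'a measure \<Rightarrow> 'a set \<Rightarrow> ('a \<Rightarrow> real) \<Rightarrow> 'a \<Rightarrow> real" where
  "cond_exp_event M F A f = (\<lambda>\<omega>. real_cond_exp M F (\<lambda>\<omega>'. indicator A \<omega>' * f \<omega>') \<omega>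
                                  / real_cond_exp M F (indicator A) \<omega>)"

definition cond_cov :: "'a measure \<Rightarrow> 'a measure \<Rightarrow> ('a \<Rightarrow> real) \<Rightarrow> ('a \<Rightarrow> real) \<Rightarrow> 'a \<Rightarrow> real" where
  "cond_cov M F f g = (\<lambda>\<omega>. real_cond_exp M F (\<lambda>\<omega>'. f \<omega>' * g \<omega>') \<omega>
                            - real_cond_exp M F f \<omega> * real_cond_exp M F g \<omega>)"

definition ACO :: "'a measure \<Rightarrow> (iv \<Rightarrow> 'a \<Rightarrow> real) \<Rightarrow> 'a set" where
  "ACO M D = {\<omega> \<in> space M. D Z1a \<omega> - D Z0a \<omega> = 1}"

definition SW :: "'a measure \<Rightarrow> (iv \<Rightarrow> 'a \<Rightarrow> real) \<Rightarrow> 'a set" where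
  "SW M D = {\<omega> \<in> space M. D Z1b \<omega> - D Z0b \<omega> = 1 \<and> D Z1a \<omega> - D Z0a \<omega> = 0}"

end

theory Submission
  imports Defs
begin

theorem mainTheorem1:
  fixes M :: "'a measure" and N :: "'b measure"
    and X :: "'a \<Rightarrow> 'b" and D :: "iv \<Rightarrow> 'a \<Rightarrow> real"
    and Y1 Y0 :: "'a \<Rightarrow> real"
  assumes P: "prob_space M"
    and X_meas: "X \<in> measurable M N"
    and D_meas: "\<And>z. D z \<in> borel_measurable M"
    and D_bin: "\<And>z \<omega>. \<omega> \<in> space M \<Longrightarrow> D z \<omega> \<in> {0, 1}"
    and Y1_int: "integrable M Y1" and Y0_int: "integrable M Y0"
    and mono_a: "AE \<omega> in M. D Z1a \<omega> - D Z0a \<omega> \<in> {0, 1}"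
    and mono_b: "AE \<omega> in M. D Z1b \<omega> - D Z0b \<omega> \<in> {0, 1}"
    and nested: "AE \<omega> in M. D Z1a \<omega> - D Z0a \<omega> = 1 \<longrightarrow> D Z1b \<omega> - D Z0b \<omega> = 1"
    and pos_ACO: "AE \<omega> in M. real_cond_exp M (sigmaX M N X) (indicator (ACO M D)) \<omega> > 0"
    and pos_SW: "AE \<omega> in M. real_cond_exp M (sigmaX M N X) (indicator (SW M D)) \<omega> > 0"
    and ident:
      "(\<forall>A \<in> {ACO M D, SW M D}. \<forall>Yd \<in> {Y1, Y0}.
          AE \<omega> in M. cond_exp_event M (sigmaX M N X) A Yd \<omega>
                       = real_cond_exp M (sigmaX M N X) Yd \<omega>)
       \<or> ((AE \<omega> in M. cond_cov M (sigmaX M N X) (\<lambda>\<omega>'. D Z1a \<omega>' - D Z0a \<omega>')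
                                      (\<lambda>\<omega>'. Y1 \<omega>' - Y0 \<omega>') \<omega> = 0)
          \<and> (AE \<omega> in M. cond_cov M (sigmaX M N X) (\<lambda>\<omega>'. D Z1b \<omega>' - D Z0b \<omega>')
                                      (\<lambda>\<omega>'. Y1 \<omega>' - Y0 \<omega>') \<omega> = 0))"
  shows "AE \<omega> in M.
           real_cond_exp M (sigmaX M N X) (\<lambda>\<omega>'. Y1 \<omega>' - Y0 \<omega>') \<omega>
             = cond_exp_event M (sigmaX M N X) (ACO M D) (\<lambda>\<omega>'. Y1 \<omega>' - Y0 \<omega>') \<omega>
         \<and> cond_exp_event M (sigmaX M N X) (ACO M D) (\<lambda>\<omega>'. Y1 \<omega>' - Y0 \<omega>') \<omega>
             = cond_exp_event M (sigmaX M N X) (SW M D) (\<lambda>\<omega>'. Y1 \<omega>' - Y0 \<omega>') \<omega>"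
proof -
  define F where "F = sigmaX M N X"
  define E where "E = real_cond_exp M F"
  define T where "T = (\<lambda>\<omega>'. Y1 \<omega>' - Y0 \<omega>')"
  define IA where "IA = (indicator (ACO M D) :: 'a \<Rightarrow> real)"
  define IS where "IS = (indicator (SW M D) :: 'a \<Rightarrow> real)"
  interpret prob_space M by (rule P)
  have subalg: "subalgebra M F"
  proof -
    have "sets F = {X -` A \<inter> space M | A. A \<in> sets N}"
      unfolding F_def sigmaX_def
      by (rule sets_vimage_algebra2) (use X_meas in \<open>auto simp: measurable_def\<close>)
    then have "sets F \<subseteq> sets M" using X_meas by (auto simp: measurable_sets)
    then show ?thesis unfolding subalgebra_def F_def sigmaX_def by simp
  qed
  interpret fms: finite_measure_subalgebra M F
    by unfold_locales (rule subalg)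
  note [measurable] = D_meas
  have ACO_s[measurable]: "ACO M D \<in> sets M" unfolding ACO_def by measurable
  have SW_s[measurable]: "SW M D \<in> sets M" unfolding SW_def by measurable
  have Y1m[measurable]: "Y1 \<in> borel_measurable M" using Y1_int by auto
  have Y0m[measurable]: "Y0 \<in> borel_measurable M" using Y0_int by auto
  have intT: "integrable M T" unfolding T_def using Y1_int Y0_int by auto
  have intIA: "integrable M IA" unfolding IA_def using ACO_s by (simp add: integrable_indicator_iff Int_absorb2 sets.sets_into_space less_top[symmetric])
  have intIS: "integrable M IS" unfolding IS_def using SW_s by (simp add: integrable_indicator_iff Int_absorb2 sets.sets_into_space less_top[symmetric])
  have intI: "integrable M (\<lambda>x. indicator A x * f x)" if "A \<in> sets M" "integrable M f" for A and f :: "'a \<Rightarrow> real"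
    using integrable_mult_indicator[OF that] by simp
  have intIAT: "integrable M (\<lambda>x. IA x * T x)" unfolding IA_def using intI[OF ACO_s intT] .
  have intIST: "integrable M (\<lambda>x. IS x * T x)" unfolding IS_def using intI[OF SW_s intT] .
  have ceA: "cond_exp_event M F (ACO M D) T = (\<lambda>\<omega>. E (\<lambda>x. IA x * T x) \<omega> / E IA \<omega>)"
    unfolding cond_exp_event_def E_def IA_def ..
  have ceS: "cond_exp_event M F (SW M D) T = (\<lambda>\<omega>. E (\<lambda>x. IS x * T x) \<omega> / E IS \<omega>)"
    unfolding cond_exp_event_def E_def IS_def ..
  have ET: "AE \<omega> in M. E T \<omega> = E Y1 \<omega> - E Y0 \<omega>"
    unfolding E_def T_def using fms.real_cond_exp_diff[OF Y1_int Y0_int] .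
  have key: "AE \<omega> in M. E (\<lambda>x. IA x * T x) \<omega> / E IA \<omega> = E T \<omega> \<and> E (\<lambda>x. IS x * T x) \<omega> / E IS \<omega> = E T \<omega>"
    using ident
  proof
    assume H: "\<forall>A \<in> {ACO M D, SW M D}. \<forall>Yd \<in> {Y1, Y0}.
          AE \<omega> in M. cond_exp_event M (sigmaX M N X) A Yd \<omega>
                       = real_cond_exp M (sigmaX M N X) Yd \<omega>"
    have gen: "AE \<omega> in M. E (\<lambda>x. indicator A x * T x) \<omega> / E (indicator A) \<omega> = E T \<omega>"
      if A: "A \<in> {ACO M D, SW M D}" for A
    proof -
      have As: "A \<in> sets M" using A by auto
      have h1: "AE \<omega> in M. E (\<lambda>x. indicator A x * Y1 x) \<omega> / E (indicator A) \<omega> = E Y1 \<omega>"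
        using H A unfolding cond_exp_event_def E_def F_def by auto
      have h0: "AE \<omega> in M. E (\<lambda>x. indicator A x * Y0 x) \<omega> / E (indicator A) \<omega> = E Y0 \<omega>"
        using H A unfolding cond_exp_event_def E_def F_def by auto
      have hd: "AE \<omega> in M. E (\<lambda>x. indicator A x * Y1 x - indicator A x * Y0 x) \<omega>
                 = E (\<lambda>x. indicator A x * Y1 x) \<omega> - E (\<lambda>x. indicator A x * Y0 x) \<omega>"
        unfolding E_def using fms.real_cond_exp_diff[OF intI[OF As Y1_int] intI[OF As Y0_int]] .
      have eq: "(\<lambda>x. indicator A x * T x) = (\<lambda>x. indicator A x * Y1 x - indicator A x * Y0 x)"
        unfolding T_def by (auto simp: algebra_simps)
      show ?thesis using h1 h0 hd ET unfolding eq
        by eventually_elim (simp add: diff_divide_distrib)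
    qed
    show ?thesis using gen[of "ACO M D", OF insertI1] gen[of "SW M D", simplified] unfolding IA_def IS_def
      by eventually_elim auto
  next
    assume H: "(AE \<omega> in M. cond_cov M (sigmaX M N X) (\<lambda>\<omega>'. D Z1a \<omega>' - D Z0a \<omega>')
                                      (\<lambda>\<omega>'. Y1 \<omega>' - Y0 \<omega>') \<omega> = 0)
          \<and> (AE \<omega> in M. cond_cov M (sigmaX M N X) (\<lambda>\<omega>'. D Z1b \<omega>' - D Z0b \<omega>')
                                      (\<lambda>\<omega>'. Y1 \<omega>' - Y0 \<omega>') \<omega> = 0)"
    define Da where "Da = (\<lambda>\<omega>'. D Z1a \<omega>' - D Z0a \<omega>')"
    define Db where "Db = (\<lambda>\<omega>'. D Z1b \<omega>' - D Z0b \<omega>')"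
    have covA: "AE \<omega> in M. E (\<lambda>x. Da x * T x) \<omega> - E Da \<omega> * E T \<omega> = 0"
      using H unfolding cond_cov_def E_def F_def Da_def T_def by auto
    have covB: "AE \<omega> in M. E (\<lambda>x. Db x * T x) \<omega> - E Db \<omega> * E T \<omega> = 0"
      using H unfolding cond_cov_def E_def F_def Db_def T_def by auto
    have DaIA: "AE \<omega> in M. Da \<omega> = IA \<omega>"
      using mono_a AE_space by eventually_elim (auto simp: Da_def IA_def ACO_def indicator_def)
    have DbI: "AE \<omega> in M. Db \<omega> = IA \<omega> + IS \<omega>"
      using mono_a mono_b nested AE_space
      by eventually_elim (auto simp: Db_def IA_def IS_def ACO_def SW_def indicator_def)
    have m1[measurable]: "Da \<in> borel_measurable M" "Db \<in> borel_measurable M"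
      "IA \<in> borel_measurable M" "IS \<in> borel_measurable M" "T \<in> borel_measurable M"
      unfolding Da_def Db_def IA_def IS_def T_def by measurable
    have c1: "AE \<omega> in M. E Da \<omega> = E IA \<omega>"
      unfolding E_def by (rule fms.real_cond_exp_cong[OF DaIA]) measurable
    have c2: "AE \<omega> in M. E (\<lambda>x. Da x * T x) \<omega> = E (\<lambda>x. IA x * T x) \<omega>"
      unfolding E_def by (rule fms.real_cond_exp_cong) (use DaIA in \<open>auto\<close>)
    have c3: "AE \<omega> in M. E Db \<omega> = E (\<lambda>x. IA x + IS x) \<omega>"
      unfolding E_def by (rule fms.real_cond_exp_cong[OF DbI]) measurable
    have c4: "AE \<omega> in M. E (\<lambda>x. Db x * T x) \<omega> = E (\<lambda>x. IA x * T x + IS x * T x) \<omega>"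
      unfolding E_def by (rule fms.real_cond_exp_cong) (use DbI in \<open>auto simp: algebra_simps\<close>)
    have c5: "AE \<omega> in M. E (\<lambda>x. IA x + IS x) \<omega> = E IA \<omega> + E IS \<omega>"
      unfolding E_def by (rule fms.real_cond_exp_add[OF intIA intIS])
    have c6: "AE \<omega> in M. E (\<lambda>x. IA x * T x + IS x * T x) \<omega> = E (\<lambda>x. IA x * T x) \<omega> + E (\<lambda>x. IS x * T x) \<omega>"
      unfolding E_def by (rule fms.real_cond_exp_add[OF intIAT intIST])
    show ?thesis using covA covB c1 c2 c3 c4 c5 c6 pos_ACO pos_SW
      unfolding E_def[symmetric] F_def[symmetric] IA_def[symmetric] IS_def[symmetric]
    proof eventually_elim
      case (elim \<omega>)
      then show ?case by (auto simp: field_simps algebra_simps)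
    qed
  qed
  show ?thesis using key
    unfolding F_def[symmetric] T_def[symmetric] ceA ceS E_def[symmetric]
    by eventually_elim auto
qed

end
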